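(* Consider the problem $\min_{x\in\mathbb{R}^n}\Phi(x)$, $\Phi=\Psi+\mathcal{X}$, $\Psi=f+h$, where $f$ is differentiable with $L_f$-Lipschitz gradient (possibly nonconvex), $h$ is convex and differentiable with $L_h$-Lipschitz gradient, $L_\Psi=L_f+L_h>0$, and $\mathcal{X}$ is a proper closed convex function with bounded domain. Let $\mathcal{P}(x,y,c):=\operatorname{argmin}_u\{\langle y,u\rangle+\frac{1}{2c}\|u-x\|^2+\mathcal{X}(u)\}$ and $\mathcal{G}(x,y,c):=\frac1c[x-\mathcal{P}(x,y,c)]$, and assume there is $M$ with $\|\mathcal{P}(x,y,c)\|\le M$ for all $c>0$, $x,y$. Run the composite AG method from $x_0$ ($x^{ag}_0=x_0$): for $k\ge1$, $$x^{md}_k=(1-\alpha_k)x^{ag}_{k-1}+\alpha_kx_{k-1},\quad x_k=\mathcal{P}(x_{k-1},\nabla\Psi(x^{md}_k),\lambda_k),\quad x^{ag}_k=\mathcal{P}(x^{md}_k,\nabla\Psi(x^{md}_k),\beta_k),$$ with $\alpha_k=\frac{2}{k+1}$, $\beta_k=\frac{1}{2L_\Psi}$, $\lambda_k=\frac{k\beta_k}{2}$. Assume an optimal solution $x^*$ of $\min\Phi$ exists. Then for any $N\ge1$, $$\min_{k=1,\ldots,N}\|\mathcal{G}(x^{md}_k,\nabla\Psi(x^{md}_k),\beta_k)\|^2\le24L_\Psi\Big[\frac{4L_\Psi\|x_0-x^*\|^2}{N^2(N+1)}+\frac{L_f}{N}(\|x^*\|^2+2M^2)\Big].$$ If in addition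 $L_f=0$, then $\Phi(x^{ag}_N)-\Phi(x^* )\le\frac{4L_\Psi\|x_0-x^*\|^2}{N(N+1)}$.
   Context: $\|\cdot\|$ is the Euclidean norm. *)

theory Defs
  imports "HOL-Analysis.Analysis" "HOL-Library.Extended_Real"
begin

text \<open>Extended-real valued functions (value \<infinity> outside the effective domain).\<close>

definition proper_fn :: "('a \<Rightarrow> ereal) \<Rightarrow> bool" where
  "proper_fn X \<longleftrightarrow> (\<forall>x. X x \<noteq> -\<infinity>) \<and> (\<exists>x. X x \<noteq> \<infinity>)"

definition convex_fn :: "('a::real_vector \<Rightarrow> ereal) \<Rightarrow> bool" where
  "convex_fn X \<longleftrightarrow> (\<forall>x y t. 0 < t \<and> t < 1 \<longrightarrow>
      X ((1 - t) *\<^sub>R x + t *\<^sub>R y) \<le> ereal (1 - t) * X x + ereal t * X y)"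

definition closed_fn :: "('a::topological_space \<Rightarrow> ereal) \<Rightarrow> bool" where
  "closed_fn X \<longleftrightarrow> closed {(x, r::real). X x \<le> ereal r}"

definition dom_fn :: "('a \<Rightarrow> ereal) \<Rightarrow> 'a set" where
  "dom_fn X = {x. X x \<noteq> \<infinity>}"

definition prox_map :: "('a::real_inner \<Rightarrow> ereal) \<Rightarrow> 'a \<Rightarrow> 'a \<Rightarrow> real \<Rightarrow> 'a" where
  "prox_map X x y c = (SOME u. \<forall>v.
      ereal (inner y u + (norm (u - x))\<^sup>2 / (2 * c)) + X u
        \<le> ereal (inner y v + (norm (v - x))\<^sup>2 / (2 * c)) + X v)"

definition grad_map :: "('a::real_inner \<Rightarrow> ereal) \<Rightarrow> 'a \<Rightarrow> 'a \<Rightarrow> real \<Rightarrow> 'a" where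
  "grad_map X x y c = (1 / c) *\<^sub>R (x - prox_map X x y c)"

end

theory Submission imports Defs begin

lemma argmin_exists:
  fixes X :: "'a::euclidean_space \<Rightarrow> ereal" and g :: "'a \<Rightarrow> real"
  assumes P: "proper_fn X" and C: "closed_fn X" and B: "bounded (dom_fn X)"
    and g: "continuous_on UNIV g"
  shows "\<exists>u. \<forall>v. ereal (g u) + X u \<le> ereal (g v) + X v"
proof -
  define S where "S = closure (dom_fn X)"
  have cS: "compact S" unfolding S_def using B by (simp add: compact_closure)
  define I where "I = {r::real. \<exists>v. ereal (g v) + X v < ereal r}"
  define F where "F r = {u. X u \<le> ereal (r - g u)}" for r
  have cl: "closed (F r)" if "r \<in> I" for r
  proof -
    have "F r = (\<lambda>u. (u, r - g u)) -` {(x, r::real). X x \<le> ereal r}"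
      unfolding F_def by auto
    moreover have "continuous_on UNIV (\<lambda>u. (u, r - g u))"
      using g by (intro continuous_intros) auto
    ultimately show ?thesis using C unfolding closed_fn_def
      by (metis closed_vimage)
  qed
  have ne: "S \<inter> (\<Inter>r\<in>I'. F r) \<noteq> {}" if "finite I'" "I' \<subseteq> I" for I'
  proof (cases "I' = {}")
    case True
    from P obtain v where "X v \<noteq> \<infinity>" unfolding proper_fn_def by auto
    hence "v \<in> dom_fn X" unfolding dom_fn_def by simp
    hence "v \<in> S" unfolding S_def by (meson closure_subset subsetD)
    then show ?thesis using True by (simp add: ex_in_conv[symmetric]) blast
  next
    case False
    define r0 where "r0 = Min I'"
    have "r0 \<in> I" using False that Min_in[of I'] unfolding r0_def by blast
    then obtain v where v: "ereal (g v) + X v < ereal r0" unfolding I_def by auto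
    have "X v \<noteq> \<infinity>" using v by auto
    hence "v \<in> dom_fn X" unfolding dom_fn_def by simp
    hence "v \<in> S" unfolding S_def by (meson closure_subset subsetD)
    moreover have "v \<in> F r" if "r \<in> I'" for r
    proof -
      have "r0 \<le> r" unfolding r0_def using that \<open>finite I'\<close> by auto
      hence "ereal (g v) + X v < ereal r" using v by (meson ereal_less_eq(3) less_le_trans)
      then show ?thesis unfolding F_def
        by (cases "X v") (auto simp: algebra_simps)
    qed
    ultimately show ?thesis by auto
  qed
  have "S \<inter> (\<Inter>r\<in>I. F r) \<noteq> {}"
    by (rule compact_imp_fip_image[OF cS cl ne]) auto
  then obtain u where u: "\<And>r. r \<in> I \<Longrightarrow> X u \<le> ereal (r - g u)" unfolding F_def by auto
  have "ereal (g u) + X u \<le> ereal (g v) + X v" for v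
  proof (cases "X v")
    case (real xv)
    show ?thesis
    proof (rule ereal_le_epsilon2)
      fix e :: real assume e: "0 < e"
      have "g v + xv + e \<in> I" unfolding I_def using e real by (intro CollectI exI[of _ v]) auto
      from u[OF this] have "X u \<le> ereal (g v + xv + e - g u)" .
      then show "ereal (g u) + X u \<le> ereal (g v) + X v + ereal e"
        using real by (cases "X u") auto
    qed
  next
    case PInf then show ?thesis by simp
  next
    case MInf then show ?thesis using P unfolding proper_fn_def by auto
  qed
  then show ?thesis by blast
qed

lemma norm_add_sq: "(norm (a + b))\<^sup>2 = (norm a)\<^sup>2 + 2 * inner a b + (norm (b::'a::real_inner))\<^sup>2"
  using dot_norm[of a b] by simp

lemma nonneg_from_small:
  fixes A B :: real
  assumes "B \<ge> 0" "\<And>t. 0 < t \<Longrightarrow> t < 1 \<Longrightarrow> 0 \<le> A + t * B"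
  shows "0 \<le> A"
proof (rule ccontr)
  assume "\<not> 0 \<le> A"
  define t where "t = min (1/2) (- A / (B + 1))"
  have "0 < - A / (B + 1)" using \<open>\<not> 0 \<le> A\<close> assms(1) by (intro divide_pos_pos) auto
  then have t0: "0 < t" "t < 1" unfolding t_def by auto
  have "t \<le> - A / (B + 1)" unfolding t_def by simp
  hence "t * (B + 1) \<le> (- A / (B + 1)) * (B + 1)" using assms(1) by (intro mult_right_mono) auto
  also have "\<dots> = - A" using assms(1) by simp
  finally have "t * (B + 1) \<le> - A" .
  hence "t * B < - A" using t0 by (simp add: algebra_simps)
  with assms(2)[OF t0] show False by simp
qed

lemma prox_min:
  fixes X :: "'a::euclidean_space \<Rightarrow> ereal"
  assumes P: "proper_fn X" and C: "closed_fn X" and B: "bounded (dom_fn X)"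
  shows "ereal (inner y (prox_map X x y c) + (norm (prox_map X x y c - x))\<^sup>2 / (2 * c)) + X (prox_map X x y c)
        \<le> ereal (inner y v + (norm (v - x))\<^sup>2 / (2 * c)) + X v"
proof -
  have "\<exists>u. \<forall>v. ereal (inner y u + (norm (u - x))\<^sup>2 / (2 * c)) + X u
        \<le> ereal (inner y v + (norm (v - x))\<^sup>2 / (2 * c)) + X v"
    by (rule argmin_exists[OF P C B]) (simp only: divide_inverse, intro continuous_intros)
  from someI_ex[OF this] show ?thesis unfolding prox_map_def by blast
qed

lemma prox_three_point:
  fixes X :: "'a::euclidean_space \<Rightarrow> ereal"
  assumes P: "proper_fn X" and C: "closed_fn X" and B: "bounded (dom_fn X)"
    and Cv: "convex_fn X" and c: "c > 0" and u: "X u \<noteq> \<infinity>"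
  shows "X (prox_map X x y c) \<noteq> \<infinity>"
    and "inner y (prox_map X x y c) + real_of_ereal (X (prox_map X x y c))
          + (norm (prox_map X x y c - x))\<^sup>2 / (2 * c) + (norm (u - prox_map X x y c))\<^sup>2 / (2 * c)
        \<le> inner y u + real_of_ereal (X u) + (norm (u - x))\<^sup>2 / (2 * c)"
proof -
  define p where "p = prox_map X x y c"
  define g where "g v = inner y v + (norm (v - x))\<^sup>2 / (2 * c)" for v
  have min: "ereal (g p) + X p \<le> ereal (g v) + X v" for v
    unfolding p_def g_def by (rule prox_min[OF P C B])
  have nm: "X v \<noteq> -\<infinity>" for v using P unfolding proper_fn_def by auto
  obtain xu where xu: "X u = ereal xu" using u nm[of u] by (cases "X u") auto
  show fin: "X (prox_map X x y c) \<noteq> \<infinity>"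
    using min[of u] xu unfolding p_def[symmetric] by auto
  obtain xp where xp: "X p = ereal xp" using fin nm[of p] unfolding p_def[symmetric] by (cases "X p") auto
  define a where "a = p - x"
  define d where "d = u - p"
  define A where "A = inner y d + inner a d / c + xu - xp"
  define Bq where "Bq = (norm d)\<^sup>2 / (2 * c)"
  have key: "0 \<le> A + t * Bq" if t: "0 < t" "t < 1" for t
  proof -
    define ut where "ut = (1 - t) *\<^sub>R p + t *\<^sub>R u"
    have "X ut \<le> ereal (1 - t) * X p + ereal t * X u"
      using Cv t unfolding convex_fn_def ut_def by blast
    also have "\<dots> = ereal ((1 - t) * xp + t * xu)" using xp xu by simp
    finally have Xut: "X ut \<le> ereal ((1 - t) * xp + t * xu)" .
    have "ereal (g p + xp) \<le> ereal (g ut) + X ut" using min[of ut] xp by simp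
    also have "\<dots> \<le> ereal (g ut + ((1 - t) * xp + t * xu))" using Xut
      by (metis add_left_mono plus_ereal.simps(1))
    finally have le: "g p + xp \<le> g ut + ((1 - t) * xp + t * xu)" by simp
    have ute: "ut - x = a + t *\<^sub>R d" unfolding ut_def a_def d_def by (simp add: algebra_simps)
    have "ut = p + t *\<^sub>R d" unfolding ut_def d_def by (simp add: algebra_simps)
    have nrm: "(norm (a + t *\<^sub>R d))\<^sup>2 = (norm a)\<^sup>2 + 2 * t * inner a d + t^2 * (norm d)\<^sup>2"
      by (simp add: norm_add_sq power_mult_distrib)
    have gut: "g ut = inner y p + t * inner y d + ((norm a)\<^sup>2 + 2 * t * inner a d + t^2 * (norm d)\<^sup>2) / (2 * c)"
      unfolding g_def ute nrm by (simp add: \<open>ut = p + t *\<^sub>R d\<close> inner_add_right)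
    have gp: "g p = inner y p + (norm a)\<^sup>2 / (2 * c)" unfolding g_def a_def by simp
    have eqd: "g ut + ((1 - t) * xp + t * xu) - (g p + xp) = t * inner y d + (2 * t * inner a d + t^2 * (norm d)\<^sup>2) / (2 * c) + t * (xu - xp)"
      unfolding gut gp by (simp add: algebra_simps add_divide_distrib diff_divide_distrib)
    from le have "0 \<le> t * inner y d + (2 * t * inner a d + t^2 * (norm d)\<^sup>2) / (2 * c) + t * (xu - xp)"
      using eqd by linarith
    also have "\<dots> = t * (A + t * Bq)" unfolding A_def Bq_def using c
      by (simp add: field_simps power2_eq_square)
    finally show ?thesis using t by (simp add: zero_le_mult_iff)
  qed
  have Bq0: "0 \<le> Bq" unfolding Bq_def using c by simp
  have A0: "0 \<le> A" by (rule nonneg_from_small[OF Bq0 key])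
  have "u - x = a + d" by (simp add: a_def d_def)
  hence "(norm (u - x))\<^sup>2 = (norm a)\<^sup>2 + 2 * inner a d + (norm d)\<^sup>2"
    by (simp add: norm_add_sq)
  then have "inner y p + xp + (norm a)\<^sup>2 / (2 * c) + (norm d)\<^sup>2 / (2 * c)
        \<le> inner y u + xu + (norm (u - x))\<^sup>2 / (2 * c)"
  proof -
    assume eqn: "(norm (u - x))\<^sup>2 = (norm a)\<^sup>2 + 2 * inner a d + (norm d)\<^sup>2"
    have "((norm a)\<^sup>2 + 2 * inner a d + (norm d)\<^sup>2) / (2 * c)
        = (norm a)\<^sup>2 / (2 * c) + inner a d / c + (norm d)\<^sup>2 / (2 * c)"
      by (simp add: add_divide_distrib)
    moreover have "inner y d = inner y u - inner y p" unfolding d_def by (simp add: inner_diff_right)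
    ultimately show ?thesis using A0 unfolding A_def eqn by linarith
  qed
  then show "inner y (prox_map X x y c) + real_of_ereal (X (prox_map X x y c))
          + (norm (prox_map X x y c - x))\<^sup>2 / (2 * c) + (norm (u - prox_map X x y c))\<^sup>2 / (2 * c)
        \<le> inner y u + real_of_ereal (X u) + (norm (u - x))\<^sup>2 / (2 * c)"
    unfolding p_def[symmetric] using xp xu a_def d_def by simp
qed

lemma line_deriv:
  fixes F :: "'a::real_inner \<Rightarrow> real"
  assumes "\<And>x. (F has_derivative (\<lambda>v. inner (gF x) v)) (at x)"
  shows "((\<lambda>t. F (x + t *\<^sub>R d)) has_real_derivative inner (gF (x + t *\<^sub>R d)) d) (at t)"
proof -
  have l: "((\<lambda>t. x + t *\<^sub>R d) has_derivative (\<lambda>s. s *\<^sub>R d)) (at t)"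
    by (auto intro!: derivative_eq_intros)
  have h: "((\<lambda>t. F (x + t *\<^sub>R d)) has_derivative (\<lambda>s. inner (gF (x + t *\<^sub>R d)) (s *\<^sub>R d))) (at t)"
    by (rule has_derivative_compose[OF l assms])
  have eq: "(\<lambda>s. inner (gF (x + t *\<^sub>R d)) (s *\<^sub>R d)) = (*) (inner (gF (x + t *\<^sub>R d)) d)"
    by (auto simp: fun_eq_iff)
  show ?thesis unfolding has_field_derivative_def using h by (simp only: eq)
qed

lemma smooth_bound:
  fixes F :: "'a::real_inner \<Rightarrow> real"
  assumes D: "\<And>x. (F has_derivative (\<lambda>v. inner (gF x) v)) (at x)"
    and Lip: "\<And>x y. norm (gF x - gF y) \<le> L * norm (x - y)"
  shows "F y \<le> F x + inner (gF x) (y - x) + L / 2 * (norm (y - x))\<^sup>2"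
    and "F x + inner (gF x) (y - x) \<le> F y + L / 2 * (norm (y - x))\<^sup>2"
proof -
  define d where "d = y - x"
  define g0 where "g0 = inner (gF x) d"
  define n where "n = (norm d)\<^sup>2"
  have bnd: "\<bar>inner (gF (x + t *\<^sub>R d)) d - g0\<bar> \<le> L * t * n" if "0 \<le> t" for t
  proof -
    have "\<bar>inner (gF (x + t *\<^sub>R d)) d - g0\<bar> = \<bar>inner (gF (x + t *\<^sub>R d) - gF x) d\<bar>"
      unfolding g0_def by (simp add: inner_diff_left)
    also have "\<dots> \<le> norm (gF (x + t *\<^sub>R d) - gF x) * norm d" by (rule Cauchy_Schwarz_ineq2)
    also have "\<dots> \<le> (L * norm (t *\<^sub>R d)) * norm d"
      using Lip[of "x + t *\<^sub>R d" x] by (intro mult_right_mono) auto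
    also have "\<dots> = L * t * n" using that unfolding n_def by (simp add: power2_eq_square)
    finally show ?thesis .
  qed
  have der: "((\<lambda>t. F (x + t *\<^sub>R d) - t * g0 + s * (L / 2 * t^2 * n)) has_real_derivative
      inner (gF (x + t *\<^sub>R d)) d - g0 + s * (L * t * n)) (at t)" for t s
    by (auto intro!: derivative_eq_intros line_deriv[OF D])
  have "F (x + 1 *\<^sub>R d) - 1 * g0 + (-1) * (L / 2 * 1^2 * n) \<le> F (x + 0 *\<^sub>R d) - 0 * g0 + (-1) * (L / 2 * 0^2 * n)"
  proof (rule DERIV_nonpos_imp_nonincreasing[of 0 1])
    fix t :: real assume "0 \<le> t" "t \<le> 1"
    then show "\<exists>y. ((\<lambda>t. F (x + t *\<^sub>R d) - t * g0 + (-1) * (L / 2 * t^2 * n)) has_real_derivative y) (at t) \<and> y \<le> 0"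
      using der[where t=t and s="-1"] bnd[of t] by (intro exI[of _ "inner (gF (x + t *\<^sub>R d)) d - g0 + (-1) * (L * t * n)"]) auto
  qed simp
  then show "F y \<le> F x + inner (gF x) (y - x) + L / 2 * (norm (y - x))\<^sup>2"
    unfolding d_def g0_def n_def by simp
  have "F (x + 0 *\<^sub>R d) - 0 * g0 + 1 * (L / 2 * 0^2 * n) \<le> F (x + 1 *\<^sub>R d) - 1 * g0 + 1 * (L / 2 * 1^2 * n)"
  proof (rule DERIV_nonneg_imp_nondecreasing[of 0 1])
    fix t :: real assume "0 \<le> t" "t \<le> 1"
    then show "\<exists>y. ((\<lambda>t. F (x + t *\<^sub>R d) - t * g0 + 1 * (L / 2 * t^2 * n)) has_real_derivative y) (at t) \<and> y \<ge> 0"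
      using der[where t=t and s=1] bnd[of t] by (intro exI[of _ "inner (gF (x + t *\<^sub>R d)) d - g0 + 1 * (L * t * n)"]) auto
  qed simp
  then show "F x + inner (gF x) (y - x) \<le> F y + L / 2 * (norm (y - x))\<^sup>2"
    unfolding d_def g0_def n_def by simp
qed

lemma convex_tangent:
  fixes F :: "'a::real_inner \<Rightarrow> real"
  assumes D: "\<And>x. (F has_derivative (\<lambda>v. inner (gF x) v)) (at x)"
    and C: "convex_on UNIV F"
  shows "F x + inner (gF x) (y - x) \<le> F y"
proof -
  define d where "d = y - x"
  have cv: "convex_on UNIV (\<lambda>t::real. F (x + t *\<^sub>R d))"
  proof (rule convex_onI)
    fix t a b :: real assume t: "0 < t" "t < 1"
    have "x + ((1 - t) * a + t * b) *\<^sub>R d = (1 - t) *\<^sub>R (x + a *\<^sub>R d) + t *\<^sub>R (x + b *\<^sub>R d)"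
      by (simp add: algebra_simps)
    then show "F (x + ((1 - t) *\<^sub>R a + t *\<^sub>R b) *\<^sub>R d) \<le> (1 - t) * F (x + a *\<^sub>R d) + t * F (x + b *\<^sub>R d)"
      using convex_onD[OF C, of t "x + a *\<^sub>R d" "x + b *\<^sub>R d"] t by simp
  qed simp
  have "F (x + 1 *\<^sub>R d) - F (x + 0 *\<^sub>R d) \<ge> inner (gF (x + 0 *\<^sub>R d)) d * (1 - 0)"
    using line_deriv[OF D, of x d 0]
    by (intro convex_on_imp_above_tangent[OF cv]) (auto intro: has_field_derivative_at_within)
  then show ?thesis unfolding d_def by simp
qed

lemma step_alg:
  fixes al r L Lf Pmd Pag Pag1 Ps Xag Xag1 Xk Xs Xbar iag imd iag1 ik isx ibar nagmd Dl D0 D1 nbar n1 ns :: real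
  assumes S: "Pag \<le> Pmd + iag - imd + L / 2 * nagmd"
    and T2: "iag + Xag + L * nagmd \<le> ibar + Xbar + L * nbar"
    and ib: "ibar = (1 - al) * iag1 + al * ik"
    and nb: "nbar = al^2 * Dl"
    and C: "Xbar \<le> (1 - al) * Xag1 + al * Xk"
    and T1: "ik + Xk + r * (Dl + D1) \<le> isx + Xs + r * D0"
    and Los: "Pmd + isx - imd \<le> Ps + Lf / 2 * ns"
    and Lo1: "Pmd + iag1 - imd \<le> Pag1 + Lf / 2 * n1"
    and al: "0 \<le> al" "al \<le> 1"
  shows "Pag + Xag - (Ps + Xs) \<le> (1 - al) * (Pag1 + Xag1 - (Ps + Xs)) + (1 - al) * (Lf / 2 * n1)
          + al * (Lf / 2 * ns) + al * r * (D0 - D1) - (al * r - L * al^2) * Dl - L / 2 * nagmd"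
proof -
  have A1: "al * ik + al * Xk + al * r * Dl + al * r * D1 \<le> al * isx + al * Xs + al * r * D0"
    using mult_left_mono[OF T1 al(1)] by (simp add: algebra_simps)
  have A2: "al * Pmd + al * isx - al * imd \<le> al * Ps + al * (Lf / 2 * ns)"
    using mult_left_mono[OF Los al(1)] by (simp add: algebra_simps)
  have "0 \<le> 1 - al" using al by simp
  have A3: "(1 - al) * Pmd + (1 - al) * iag1 - (1 - al) * imd \<le> (1 - al) * Pag1 + (1 - al) * (Lf / 2 * n1)"
    using mult_left_mono[OF Lo1 \<open>0 \<le> 1 - al\<close>] by (simp add: algebra_simps)
  have e1: "(1 - al) * Pmd + al * Pmd = Pmd" "(1 - al) * imd + al * imd = imd"
    by (simp_all add: algebra_simps)
  have e2: "(1 - al) * (Pag1 + Xag1 - (Ps + Xs)) = (1 - al) * Pag1 + (1 - al) * Xag1 - (1 - al) * Ps - (1 - al) * Xs"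
    "al * r * (D0 - D1) = al * r * D0 - al * r * D1"
    "(al * r - L * al^2) * Dl = al * r * Dl - L * al^2 * Dl"
    "(1 - al) * Ps + al * Ps = Ps" "(1 - al) * Xs + al * Xs = Xs"
    by (simp_all add: algebra_simps)
  have e3: "L * nbar = L * al^2 * Dl" using nb by simp
  show ?thesis using S T2 ib C A1 A2 A3 e1 e2 e3 by linarith
qed


lemma sq_sum_le: "(norm (a + b))\<^sup>2 \<le> 2 * (norm a)\<^sup>2 + 2 * (norm (b::'a::real_normed_vector))\<^sup>2"
proof -
  have "norm (a + b) \<le> norm a + norm b" by (rule norm_triangle_ineq)
  then have "(norm (a + b))\<^sup>2 \<le> (norm a + norm b)\<^sup>2" by (intro power_mono) auto
  also have "\<dots> \<le> 2 * (norm a)\<^sup>2 + 2 * (norm b)\<^sup>2"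
    using sum_squares_ge_zero[of "norm a - norm b" 0] by (simp add: power2_eq_square algebra_simps)
  finally show ?thesis .
qed

lemma sq_diff_bound: "norm b \<le> M \<Longrightarrow> (norm (a - b))\<^sup>2 \<le> 2 * (norm a)\<^sup>2 + 2 * M\<^sup>2"
proof -
  assume b: "norm b \<le> M"
  have "(norm (a - b))\<^sup>2 \<le> 2 * (norm a)\<^sup>2 + 2 * (norm (- b))\<^sup>2" using sq_sum_le[of a "- b"] by simp
  also have "(norm (- b))\<^sup>2 \<le> M\<^sup>2" using b by (simp add: power_mono)
  finally show ?thesis by simp
qed

theorem corollary2:
  fixes f h :: "'a::euclidean_space \<Rightarrow> real"
    and gf gh :: "'a \<Rightarrow> 'a"
    and X :: "'a \<Rightarrow> ereal"
    and Lf Lh M :: real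
    and x0 xstar :: 'a
    and xs xmd xag :: "nat \<Rightarrow> 'a"
    and N :: nat
  assumes f_grad: "\<And>x. (f has_derivative (\<lambda>v. inner (gf x) v)) (at x)"
    and f_lip: "Lf \<ge> 0" "\<And>x y. norm (gf x - gf y) \<le> Lf * norm (x - y)"
    and h_grad: "\<And>x. (h has_derivative (\<lambda>v. inner (gh x) v)) (at x)"
    and h_convex: "convex_on UNIV h"
    and h_lip: "Lh \<ge> 0" "\<And>x y. norm (gh x - gh y) \<le> Lh * norm (x - y)"
    and L_pos: "Lf + Lh > 0"
    and X_proper: "proper_fn X" and X_closed: "closed_fn X" and X_convex: "convex_fn X"
    and X_bdd: "bounded (dom_fn X)"
    and P_bdd: "\<And>x y c. c > 0 \<Longrightarrow> norm (prox_map X x y c) \<le> M"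
    and init: "xs 0 = x0" "xag 0 = x0"
    and md_step: "\<And>k. k \<ge> 1 \<Longrightarrow>
        xmd k = (1 - 2 / (real k + 1)) *\<^sub>R xag (k - 1) + (2 / (real k + 1)) *\<^sub>R xs (k - 1)"
    and x_step: "\<And>k. k \<ge> 1 \<Longrightarrow>
        xs k = prox_map X (xs (k - 1)) (gf (xmd k) + gh (xmd k)) (real k * (1 / (2 * (Lf + Lh))) / 2)"
    and ag_step: "\<And>k. k \<ge> 1 \<Longrightarrow>
        xag k = prox_map X (xmd k) (gf (xmd k) + gh (xmd k)) (1 / (2 * (Lf + Lh)))"
    and opt: "\<And>x. ereal (f xstar + h xstar) + X xstar \<le> ereal (f x + h x) + X x"
    and N: "N \<ge> 1"
  shows "((MIN k\<in>{1..N}. (norm (grad_map X (xmd k) (gf (xmd k) + gh (xmd k)) (1 / (2 * (Lf + Lh)))))\<^sup>2)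
           \<le> 24 * (Lf + Lh) * (4 * (Lf + Lh) * (norm (x0 - xstar))\<^sup>2 / (real N ^ 2 * (real N + 1))
                + Lf / real N * ((norm xstar)\<^sup>2 + 2 * M\<^sup>2)))
         \<and> (Lf = 0 \<longrightarrow>
         (ereal (f (xag N) + h (xag N)) + X (xag N)) - (ereal (f xstar + h xstar) + X xstar)
           \<le> ereal (4 * (Lf + Lh) * (norm (x0 - xstar))\<^sup>2 / (real N * (real N + 1))))"
proof -
  define L where "L = Lf + Lh"
  have Lpos: "L > 0" using L_pos unfolding L_def .
  define be where "be = 1 / (2 * (Lf + Lh))"
  have be_pos: "be > 0" unfolding be_def using L_pos by simp
  define Psi where "Psi u = f u + h u" for u
  define gP where "gP u = gf u + gh u" for u
  define Xr where "Xr u = real_of_ereal (X u)" for u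
  define lam where "lam k = real k * (1 / (2 * (Lf + Lh))) / 2" for k :: nat
  define E where "E k = Psi (xag k) + Xr (xag k) - (Psi xstar + Xr xstar)" for k
  define D where "D k = (norm (xs k - xstar))\<^sup>2" for k
  define Gn where "Gn k = (norm (grad_map X (xmd k) (gf (xmd k) + gh (xmd k)) (1 / (2 * (Lf + Lh)))))\<^sup>2" for k
  define W where "W k = real k * (real k + 1) / 2" for k :: nat
  define a2 where "a2 = (norm xstar)\<^sup>2"
  define M2 where "M2 = M\<^sup>2"
  have M0: "0 \<le> M" using P_bdd[of 1] by (meson norm_ge_zero order_trans zero_less_one)
  have PsiD: "(Psi has_derivative (\<lambda>v. inner (gP x) v)) (at x)" for x
  proof -
    have "((\<lambda>u. f u + h u) has_derivative (\<lambda>v. inner (gf x) v + inner (gh x) v)) (at x)"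
      by (rule has_derivative_add[OF f_grad h_grad])
    then show ?thesis unfolding Psi_def gP_def by (simp add: inner_add_left)
  qed
  have gPL: "norm (gP x - gP y) \<le> L * norm (x - y)" for x y
  proof -
    have "norm (gP x - gP y) = norm ((gf x - gf y) + (gh x - gh y))" unfolding gP_def by (simp add: algebra_simps)
    also have "\<dots> \<le> norm (gf x - gf y) + norm (gh x - gh y)" by (rule norm_triangle_ineq)
    also have "\<dots> \<le> Lf * norm (x - y) + Lh * norm (x - y)" using f_lip(2) h_lip(2) by (intro add_mono)
    finally show ?thesis unfolding L_def by (simp add: algebra_simps)
  qed
  have Up: "Psi y \<le> Psi x + inner (gP x) (y - x) + L / 2 * (norm (y - x))\<^sup>2" for x y
    by (rule smooth_bound(1)[OF PsiD gPL])
  have Lo: "Psi x + inner (gP x) (u - x) \<le> Psi u + Lf / 2 * (norm (u - x))\<^sup>2" for x u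
  proof -
    have "f x + inner (gf x) (u - x) \<le> f u + Lf / 2 * (norm (u - x))\<^sup>2"
      by (rule smooth_bound(2)[OF f_grad f_lip(2)])
    moreover have "h x + inner (gh x) (u - x) \<le> h u" by (rule convex_tangent[OF h_grad h_convex])
    ultimately show ?thesis unfolding Psi_def gP_def by (simp add: inner_add_left)
  qed
  have nm: "X v \<noteq> -\<infinity>" for v using X_proper unfolding proper_fn_def by auto
  have Xe: "X v = ereal (Xr v)" if "X v \<noteq> \<infinity>" for v
    using that nm[of v] unfolding Xr_def by (cases "X v") auto
  have Xs_fin: "X xstar \<noteq> \<infinity>"
  proof -
    from X_proper obtain v where v: "X v \<noteq> \<infinity>" unfolding proper_fn_def by auto
    have "ereal (f xstar + h xstar) + X xstar \<le> ereal (f v + h v) + X v" by (rule opt)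
    also have "\<dots> < \<infinity>" using v Xe[OF v] by simp
    finally show ?thesis by auto
  qed
  note TP = prox_three_point[OF X_proper X_closed X_bdd X_convex]
  have lam_pos: "lam k > 0" if "k \<ge> 1" for k unfolding lam_def using that L_pos by simp
  have xs_fin: "X (xs k) \<noteq> \<infinity>" if "k \<ge> 1" for k
    using x_step[OF that] TP(1)[OF lam_pos[OF that] Xs_fin] unfolding lam_def by simp
  have ag_fin: "X (xag k) \<noteq> \<infinity>" if "k \<ge> 1" for k
    using ag_step[OF that] TP(1)[OF be_pos Xs_fin] unfolding be_def by simp
  have xs_M: "norm (xs k) \<le> M" if "k \<ge> 1" for k
    using x_step[OF that] P_bdd[OF lam_pos[OF that]] unfolding lam_def by simp
  have ag_M: "norm (xag k) \<le> M" if "k \<ge> 1" for k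
    using ag_step[OF that] P_bdd[OF be_pos] unfolding be_def by simp
  have E0: "0 \<le> E k" if "k \<ge> 1" for k
  proof -
    have "ereal (f xstar + h xstar) + X xstar \<le> ereal (f (xag k) + h (xag k)) + X (xag k)" by (rule opt)
    then show ?thesis unfolding E_def Psi_def using Xe[OF Xs_fin] Xe[OF ag_fin[OF that]] by simp
  qed
  have D0: "0 \<le> D k" for k unfolding D_def by simp
  have step: "E k \<le> (1 - 2 / (real k + 1)) * E (k - 1)
      + (1 - 2 / (real k + 1)) * (Lf / 2 * (norm (xag (k - 1) - xmd k))\<^sup>2)
      + 2 / (real k + 1) * (Lf / 2 * (norm (xstar - xmd k))\<^sup>2)
      + 2 / (real k + 1) * (1 / (2 * lam k)) * (D (k - 1) - D k)
      - (2 / (real k + 1) * (1 / (2 * lam k)) - L * (2 / (real k + 1))^2) * (norm (xs k - xs (k - 1)))\<^sup>2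
      - L / 2 * (norm (xag k - xmd k))\<^sup>2" if k1: "k \<ge> 1" for k
  proof -
    define al where "al = 2 / (real k + 1)"
    have al01: "0 \<le> al" "al \<le> 1" using k1 unfolding al_def by auto
    define md where "md = xmd k"
    define gk where "gk = gP md"
    define xb where "xb = (1 - al) *\<^sub>R xag (k - 1) + al *\<^sub>R xs k"
    have mdeq: "md = (1 - al) *\<^sub>R xag (k - 1) + al *\<^sub>R xs (k - 1)"
      unfolding md_def al_def by (rule md_step[OF k1])
    have xbfin: "X xb \<noteq> \<infinity>" and Cb: "Xr xb \<le> (1 - al) * Xr (xag (k - 1)) + al * Xr (xs k)"
    proof -
      have "X xb \<noteq> \<infinity> \<and> Xr xb \<le> (1 - al) * Xr (xag (k - 1)) + al * Xr (xs k)"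
      proof (cases "k = 1")
        case True
        then have "al = 1" unfolding al_def by simp
        then show ?thesis unfolding xb_def using xs_fin[OF k1] by simp
      next
        case False
        then have k2: "k - 1 \<ge> 1" using k1 by simp
        have "0 < al" "al < 1" using False k1 unfolding al_def by auto
        then have "X xb \<le> ereal (1 - al) * X (xag (k - 1)) + ereal al * X (xs k)"
          using X_convex unfolding convex_fn_def xb_def by blast
        also have "\<dots> = ereal ((1 - al) * Xr (xag (k - 1)) + al * Xr (xs k))"
          using Xe[OF ag_fin[OF k2]] Xe[OF xs_fin[OF k1]] by simp
        finally have le: "X xb \<le> ereal ((1 - al) * Xr (xag (k - 1)) + al * Xr (xs k))" .
        then have "X xb \<noteq> \<infinity>" by auto
        with le show ?thesis using Xe by fastforce
      qed
      then show "X xb \<noteq> \<infinity>" "Xr xb \<le> (1 - al) * Xr (xag (k - 1)) + al * Xr (xs k)" by auto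
    qed
    have agk: "xag k = prox_map X md gk be" unfolding md_def gk_def gP_def be_def by (rule ag_step[OF k1])
    have xsk: "xs k = prox_map X (xs (k - 1)) gk (lam k)" unfolding md_def gk_def gP_def lam_def by (rule x_step[OF k1])
    have T2: "inner gk (xag k) + Xr (xag k) + (norm (xag k - md))\<^sup>2 / (2 * be) + (norm (xb - xag k))\<^sup>2 / (2 * be)
        \<le> inner gk xb + Xr xb + (norm (xb - md))\<^sup>2 / (2 * be)"
      unfolding agk Xr_def by (rule TP(2)[OF be_pos xbfin])
    have ibe: "1 / (2 * be) = L" unfolding be_def L_def using L_pos by simp
    have T2': "inner gk (xag k) + Xr (xag k) + L * (norm (xag k - md))\<^sup>2
        \<le> inner gk xb + Xr xb + L * (norm (xb - md))\<^sup>2"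
    proof -
      have "0 \<le> (norm (xb - xag k))\<^sup>2 / (2 * be)" using be_pos by simp
      moreover have dv: "z / (2 * be) = L * z" for z :: real
      proof -
        have "z / (2 * be) = z * (1 / (2 * be))" by simp
        then show ?thesis using ibe by simp
      qed
      ultimately show ?thesis using T2 dv[of "(norm (xag k - md))\<^sup>2"] dv[of "(norm (xb - md))\<^sup>2"] by linarith
    qed
    have T1: "inner gk (xs k) + Xr (xs k) + (norm (xs k - xs (k - 1)))\<^sup>2 / (2 * lam k) + (norm (xstar - xs k))\<^sup>2 / (2 * lam k)
        \<le> inner gk xstar + Xr xstar + (norm (xstar - xs (k - 1)))\<^sup>2 / (2 * lam k)"
      unfolding xsk Xr_def by (rule TP(2)[OF lam_pos[OF k1] Xs_fin])
    define r where "r = 1 / (2 * lam k)"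
    have T1': "inner gk (xs k) + Xr (xs k) + r * ((norm (xs k - xs (k - 1)))\<^sup>2 + D k)
        \<le> inner gk xstar + Xr xstar + r * D (k - 1)"
      using T1 unfolding r_def D_def by (simp add: norm_minus_commute algebra_simps)
    have S: "Psi (xag k) \<le> Psi md + inner gk (xag k) - inner gk md + L / 2 * (norm (xag k - md))\<^sup>2"
      using Up[where x=md and y="xag k"] unfolding gk_def by (simp add: inner_diff_right)
    have Los: "Psi md + inner gk xstar - inner gk md \<le> Psi xstar + Lf / 2 * (norm (xstar - md))\<^sup>2"
      using Lo[where x=md and u=xstar] unfolding gk_def by (simp add: inner_diff_right)
    have Lo1: "Psi md + inner gk (xag (k - 1)) - inner gk md \<le> Psi (xag (k - 1)) + Lf / 2 * (norm (xag (k - 1) - md))\<^sup>2"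
      using Lo[where x=md and u="xag (k - 1)"] unfolding gk_def by (simp add: inner_diff_right)
    have ib: "inner gk xb = (1 - al) * inner gk (xag (k - 1)) + al * inner gk (xs k)"
      unfolding xb_def by (simp add: inner_add_right)
    have "xb - md = al *\<^sub>R (xs k - xs (k - 1))" unfolding xb_def mdeq by (simp add: algebra_simps)
    then have nb: "(norm (xb - md))\<^sup>2 = al^2 * (norm (xs k - xs (k - 1)))\<^sup>2"
      using al01 by (simp add: power_mult_distrib)
    have "Psi (xag k) + Xr (xag k) - (Psi xstar + Xr xstar) \<le> (1 - al) * (Psi (xag (k - 1)) + Xr (xag (k - 1)) - (Psi xstar + Xr xstar))
        + (1 - al) * (Lf / 2 * (norm (xag (k - 1) - md))\<^sup>2) + al * (Lf / 2 * (norm (xstar - md))\<^sup>2)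
        + al * r * (D (k - 1) - D k) - (al * r - L * al^2) * (norm (xs k - xs (k - 1)))\<^sup>2 - L / 2 * (norm (xag k - md))\<^sup>2"
      by (rule step_alg[OF S T2' ib nb Cb T1' Los Lo1 al01])
    then show ?thesis unfolding E_def al_def md_def r_def .
  qed
  have GnE: "Gn k = 4 * L^2 * (norm (xag k - xmd k))\<^sup>2" if k1: "k \<ge> 1" for k
  proof -
    have "grad_map X (xmd k) (gf (xmd k) + gh (xmd k)) (1 / (2 * (Lf + Lh))) = (2 * L) *\<^sub>R (xmd k - xag k)"
      unfolding grad_map_def ag_step[OF k1] L_def by simp
    then show ?thesis unfolding Gn_def using Lpos
      by (simp add: power_mult_distrib norm_minus_commute)
  qed
  have Wnn: "0 \<le> W k" for k unfolding W_def by simp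
  have r_eq: "1 / (2 * lam k) = 2 * L / real k" if "k \<ge> 1" for k
    unfolding lam_def L_def using that L_pos by (simp add: field_simps)
  have LfL: "Lf \<le> L" unfolding L_def using h_lip(1) by simp
  have xmd1: "xmd 1 = xs 0" using md_step[of 1] by simp
  have sc1: "W 1 * E 1 + W 1 * Gn 1 / (8 * L) + 2 * L * D 1 \<le> 2 * L * D 0 + Lf * (2 * (a2 + M2))"
  proof -
    define Dl where "Dl = (norm (xs 1 - xs 0))\<^sup>2"
    define nag where "nag = (norm (xag 1 - xmd 1))\<^sup>2"
    define ns where "ns = (norm (xstar - xmd 1))\<^sup>2"
    have r1: "1 / (2 * lam 1) = 2 * L" using r_eq[of 1] by simp
    have st: "E 1 \<le> Lf / 2 * ns + 2 * L * (D 0 - D 1) - L * Dl - L / 2 * nag"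
      using step[of 1, unfolded r1] unfolding Dl_def nag_def ns_def by (simp add: algebra_simps)
    have "ns \<le> 2 * (norm (xstar - xs 1))\<^sup>2 + 2 * Dl"
      unfolding ns_def Dl_def xmd1 using sq_sum_le[of "xstar - xs 1" "xs 1 - xs 0"] by simp
    moreover have "(norm (xstar - xs 1))\<^sup>2 \<le> 2 * a2 + 2 * M2"
      unfolding a2_def M2_def by (rule sq_diff_bound[OF xs_M]) simp
    ultimately have ns: "ns \<le> 4 * (a2 + M2) + 2 * Dl" by simp
    have "Lf / 2 * ns \<le> Lf / 2 * (4 * (a2 + M2) + 2 * Dl)" using ns f_lip(1) by (intro mult_left_mono) auto
    then have m1: "Lf / 2 * ns \<le> 2 * Lf * a2 + 2 * Lf * M2 + Lf * Dl" by (simp add: algebra_simps)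
    have m2: "Lf * Dl \<le> L * Dl" using LfL Dl_def by (intro mult_right_mono) auto
    have W1: "W 1 = 1" unfolding W_def by simp
    have g1: "W 1 * Gn 1 / (8 * L) = L / 2 * nag" unfolding W1 nag_def using GnE[of 1] Lpos
      by (simp add: power2_eq_square)
    have "E 1 + L / 2 * nag + 2 * L * D 1 \<le> 2 * L * D 0 + (2 * Lf * a2 + 2 * Lf * M2)"
      using st m1 m2 right_diff_distrib[of "2 * L" "D 0" "D 1"] by linarith
    moreover have "W 1 * E 1 = E 1" using W1 by simp
    moreover have "Lf * (2 * (a2 + M2)) = 2 * Lf * a2 + 2 * Lf * M2" by (simp add: algebra_simps)
    ultimately show ?thesis using g1 by linarith
  qed
  have sc2: "W k * E k + W k * Gn k / (8 * L) + 2 * L * D k \<le> W (k - 1) * E (k - 1) + 2 * L * D (k - 1)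
      + Lf * (4 * M2 + real k * (a2 + M2))" if k2: "k \<ge> 2" for k
  proof -
    have k1: "k \<ge> 1" using k2 by simp
    define rk where "rk = real k"
    have rk2: "rk \<ge> 2" unfolding rk_def using k2 by simp
    have rkp: "0 < rk" "0 < rk + 1" "rk \<noteq> 0" "rk + 1 \<noteq> 0" using rk2 by auto
    define al where "al = 2 / (rk + 1)"
    define r where "r = 2 * L / rk"
    define Dl where "Dl = (norm (xs k - xs (k - 1)))\<^sup>2"
    define nag where "nag = (norm (xag k - xmd k))\<^sup>2"
    define ns where "ns = (norm (xstar - xmd k))\<^sup>2"
    define n1 where "n1 = (norm (xag (k - 1) - xmd k))\<^sup>2"
    have st: "E k \<le> (1 - al) * E (k - 1) + (1 - al) * (Lf / 2 * n1) + al * (Lf / 2 * ns)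
        + al * r * (D (k - 1) - D k) - (al * r - L * al^2) * Dl - L / 2 * nag"
      using step[OF k1] r_eq[OF k1] unfolding al_def r_def rk_def Dl_def nag_def ns_def n1_def by simp
    define w where "w = W k"
    have w: "w = rk * (rk + 1) / 2" unfolding w_def W_def rk_def by simp
    have w0: "0 \<le> w" unfolding w_def by (rule Wnn)
    have "w * E k \<le> w * ((1 - al) * E (k - 1) + (1 - al) * (Lf / 2 * n1) + al * (Lf / 2 * ns)
        + al * r * (D (k - 1) - D k) - (al * r - L * al^2) * Dl - L / 2 * nag)"
      using st w0 by (rule mult_left_mono)
    also have "\<dots> = (w * (1 - al)) * E (k - 1) + (w * (1 - al)) * (Lf / 2 * n1) + (w * al) * (Lf / 2 * ns)
        + (w * al * r) * (D (k - 1) - D k) - (w * (al * r - L * al^2)) * Dl - w * (L / 2 * nag)"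
      by (simp add: algebra_simps)
    finally have sc: "w * E k \<le> (w * (1 - al)) * E (k - 1) + (w * (1 - al)) * (Lf / 2 * n1) + (w * al) * (Lf / 2 * ns)
        + (w * al * r) * (D (k - 1) - D k) - (w * (al * r - L * al^2)) * Dl - w * (L / 2 * nag)" .
    have c1: "w * (1 - al) = W (k - 1)" unfolding w al_def W_def rk_def using k1
      by (simp add: of_nat_diff field_simps)
    have c2: "w * al = rk" unfolding w al_def using rk2 by (simp add: field_simps)
    have c3: "w * al * r = 2 * L" unfolding c2 r_def using rk2 by simp
    have c4: "0 \<le> w * (al * r - L * al^2)"
    proof -
      have "2 * L / (rk + 1) \<le> 2 * L / rk" using Lpos rkp by (intro divide_left_mono) auto
      then have "L * al \<le> r" unfolding al_def r_def by (simp add: mult.commute)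
      then have "al * (L * al) \<le> al * r" using rkp unfolding al_def by (intro mult_left_mono) auto
      then have "0 \<le> al * r - L * al^2" by (simp add: power2_eq_square algebra_simps)
      then show ?thesis using w0 by simp
    qed
    have c5: "w * (1 - al) * al^2 \<le> 2"
    proof -
      have e: "w * (1 - al) = rk * (rk - 1) / 2" unfolding c1 W_def rk_def using k1
        by (simp add: of_nat_diff algebra_simps)
      have a1: "al * (rk + 1) = 2" using eq_divide_eq[of al 2 "rk + 1"] al_def rkp(4) by metis
      have a2': "al^2 * (rk + 1)^2 = 4" using a1 by (metis power_mult_distrib numeral_Bit0 power2_eq_square numeral_times_numeral mult_2)
      have "w * (1 - al) * al^2 * (rk + 1)^2 = (rk * (rk - 1) / 2) * (al^2 * (rk + 1)^2)"
        unfolding e by (simp only: mult.assoc)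
      also have "\<dots> = 2 * (rk * (rk - 1))" unfolding a2' by simp
      finally have "w * (1 - al) * al^2 * (rk + 1)^2 = 2 * (rk * (rk - 1))" .
      moreover have "2 * (rk * (rk - 1)) \<le> 2 * (rk + 1)^2" using rk2 by (simp add: power2_eq_square algebra_simps)
      ultimately have "(w * (1 - al) * al^2) * (rk + 1)^2 \<le> 2 * (rk + 1)^2" by simp
      then show ?thesis using rkp by (simp add: mult_le_cancel_right)
    qed
    have mdeq: "xmd k = (1 - al) *\<^sub>R xag (k - 1) + al *\<^sub>R xs (k - 1)"
      unfolding al_def rk_def by (rule md_step[OF k1])
    have k1': "k - 1 \<ge> 1" using k2 by simp
    have n1b: "n1 \<le> al^2 * (4 * M2)"
    proof -
      have "xag (k - 1) - xmd k = al *\<^sub>R (xag (k - 1) - xs (k - 1))" unfolding mdeq by (simp add: algebra_simps)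
      then have "n1 = al^2 * (norm (xag (k - 1) - xs (k - 1)))\<^sup>2" unfolding n1_def
        by (simp add: power_mult_distrib)
      moreover have "norm (xag (k - 1) - xs (k - 1)) \<le> 2 * M"
        using norm_triangle_ineq4[of "xag (k - 1)" "xs (k - 1)"] ag_M[OF k1'] xs_M[OF k1'] by simp
      then have "(norm (xag (k - 1) - xs (k - 1)))\<^sup>2 \<le> (2 * M)^2" by (intro power_mono) auto
      ultimately show ?thesis unfolding M2_def by (simp add: mult_left_mono power_mult_distrib)
    qed
    have nsb: "ns \<le> 2 * a2 + 2 * M2"
    proof -
      have al01: "0 \<le> al" "al \<le> 1" unfolding al_def using rk2 by auto
      have "norm (xmd k) \<le> (1 - al) * norm (xag (k - 1)) + al * norm (xs (k - 1))"
        unfolding mdeq using al01 norm_triangle_ineq[of "(1 - al) *\<^sub>R xag (k - 1)" "al *\<^sub>R xs (k - 1)"] by simp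
      also have "\<dots> \<le> (1 - al) * M + al * M"
        using al01 ag_M[OF k1'] xs_M[OF k1'] by (intro add_mono mult_left_mono) auto
      finally have "norm (xmd k) \<le> M" by (simp add: algebra_simps)
      then show ?thesis unfolding ns_def a2_def M2_def by (rule sq_diff_bound)
    qed
    have t1: "(w * (1 - al)) * (Lf / 2 * n1) \<le> 4 * Lf * M2"
    proof -
      have "(w * (1 - al)) * (Lf / 2 * n1) \<le> (w * (1 - al)) * (Lf / 2 * (al^2 * (4 * M2)))"
        using n1b f_lip(1) c1 Wnn[of "k - 1"] by (intro mult_left_mono) auto
      also have "\<dots> = (w * (1 - al) * al^2) * (2 * Lf * M2)" by (simp add: algebra_simps)
      also have "\<dots> \<le> 2 * (2 * Lf * M2)" using c5 f_lip(1) unfolding M2_def by (intro mult_right_mono) auto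
      finally show ?thesis by simp
    qed
    have t2: "(w * al) * (Lf / 2 * ns) \<le> rk * Lf * (a2 + M2)"
    proof -
      have "(w * al) * (Lf / 2 * ns) \<le> (w * al) * (Lf / 2 * (2 * a2 + 2 * M2))"
        using nsb f_lip(1) c2 rk2 by (intro mult_left_mono) auto
      then have "rk * (Lf / 2 * ns) \<le> rk * (Lf / 2 * (2 * a2 + 2 * M2))" unfolding c2 .
      then show ?thesis unfolding c2 by (simp add: algebra_simps)
    qed
    have t3: "0 \<le> (w * (al * r - L * al^2)) * Dl" using c4 Dl_def by simp
    have Gk: "Gn k = 4 * L^2 * nag" unfolding nag_def by (rule GnE[OF k1])
    have t4: "w * Gn k / (8 * L) = w * (L / 2 * nag)" unfolding Gk using Lpos by (simp add: power2_eq_square)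
    have "W k * E k + W k * Gn k / (8 * L) + 2 * L * D k \<le> W (k - 1) * E (k - 1) + 2 * L * D (k - 1)
      + (4 * Lf * M2 + rk * Lf * (a2 + M2))"
      using sc[unfolded c1 c3] t1[unfolded c1] t2 t3 t4 right_diff_distrib[of "2 * L" "D (k - 1)" "D k"] unfolding w_def by linarith
    then show ?thesis unfolding rk_def by (simp add: algebra_simps)
  qed
  define Cc where "Cc n = (a2 + M2) * (real n * (real n + 1) / 2 + 1) + 4 * M2 * (real n - 1)" for n :: nat
  have claim: "W n * E n + (\<Sum>j\<in>{1..n}. W j * Gn j / (8 * L)) + 2 * L * D n \<le> 2 * L * D 0 + Lf * Cc n"
    if "n \<ge> 1" for n
    using that
  proof (induction n rule: nat_induct_at_least)
    case base
    have "Cc 1 = 2 * (a2 + M2)" unfolding Cc_def by simp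
    then show ?case using sc1 by simp
  next
    case (Suc n)
    have s: "(\<Sum>j\<in>{1..Suc n}. W j * Gn j / (8 * L)) = (\<Sum>j\<in>{1..n}. W j * Gn j / (8 * L)) + W (Suc n) * Gn (Suc n) / (8 * L)"
      using Suc.hyps by (simp add: sum.cl_ivl_Suc)
    have c: "Lf * Cc (Suc n) = Lf * Cc n + Lf * (4 * M2 + real (Suc n) * (a2 + M2))"
      unfolding Cc_def by (simp add: algebra_simps)
    have st: "W (Suc n) * E (Suc n) + W (Suc n) * Gn (Suc n) / (8 * L) + 2 * L * D (Suc n)
        \<le> W n * E n + 2 * L * D n + Lf * (4 * M2 + real (Suc n) * (a2 + M2))"
      using sc2[of "Suc n"] Suc.hyps by simp
    show ?case using Suc.IH s c st by linarith
  qed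
  have sumW: "(\<Sum>j\<in>{1..n}. W j) = real n * (real n + 1) * (real n + 2) / 6" for n
  proof (induction n)
    case 0 then show ?case by simp
  next
    case (Suc n)
    have "(\<Sum>j\<in>{1..Suc n}. W j) = (\<Sum>j\<in>{1..n}. W j) + W (Suc n)" by (simp add: sum.cl_ivl_Suc)
    then show ?case using Suc.IH unfolding W_def by (simp add: field_simps)
  qed
  define n where "n = real N"
  have n1: "n \<ge> 1" unfolding n_def using N by simp
  define S where "S = (\<Sum>j\<in>{1..N}. W j * Gn j)"
  have cl: "W N * E N + S / (8 * L) + 2 * L * D N \<le> 2 * L * D 0 + Lf * Cc N"
    using claim[OF N] unfolding S_def by (simp add: sum_divide_distrib)
  have S0: "0 \<le> S" unfolding S_def Gn_def by (intro sum_nonneg mult_nonneg_nonneg Wnn) simp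
  have WE0: "0 \<le> W N * E N" using Wnn E0[OF N] by simp
  have D0N: "D 0 = (norm (x0 - xstar))\<^sup>2" unfolding D_def init by simp
  define m where "m = (MIN k\<in>{1..N}. (norm (grad_map X (xmd k) (gf (xmd k) + gh (xmd k)) (1 / (2 * (Lf + Lh)))))\<^sup>2)"
  have mle: "m \<le> Gn j" if "j \<in> {1..N}" for j
    unfolding m_def Gn_def using that by (intro Min_le) auto
  have "m * (\<Sum>j\<in>{1..N}. W j) = (\<Sum>j\<in>{1..N}. W j * m)" by (simp add: sum_distrib_left mult.commute)
  also have "\<dots> \<le> S" unfolding S_def using mle Wnn by (intro sum_mono mult_left_mono) auto
  finally have mS: "m * (n * (n + 1) * (n + 2) / 6) \<le> S" unfolding sumW n_def .
  have S_le: "S \<le> 8 * L * (2 * L * D 0 + Lf * Cc N)"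
  proof -
    have "0 \<le> 2 * L * D N" using Lpos D0[of N] by simp
    then have "S / (8 * L) \<le> 2 * L * D 0 + Lf * Cc N" using cl WE0 by linarith
    then show ?thesis using Lpos by (simp add: divide_le_eq mult.commute)
  qed
  define P where "P = n * (n + 1) * (n + 2) / 6"
  have Ppos: "P > 0" unfolding P_def using n1 by simp
  define R where "R = 24 * L * (4 * L * D 0 / (n ^ 2 * (n + 1)) + Lf / n * (a2 + 2 * M2))"
  have Cc_le: "2 * Cc N \<le> (a2 + 2 * M2) * (n + 1) * (n + 2)"
  proof -
    have "(a2 + 2 * M2) * (n + 1) * (n + 2) - 2 * Cc N = 2 * n * (a2 + M2) + M2 * ((n - 5 / 2)^2 + 15 / 4)"
      unfolding Cc_def n_def by (simp add: algebra_simps power2_eq_square)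
    moreover have "0 \<le> 2 * n * (a2 + M2) + M2 * ((n - 5 / 2)^2 + 15 / 4)"
      using n1 unfolding a2_def M2_def by (intro add_nonneg_nonneg mult_nonneg_nonneg) auto
    ultimately show ?thesis by linarith
  qed
  have RP: "8 * L * (2 * L * D 0 + Lf * Cc N) \<le> R * P"
  proof -
    define A where "A = 4 * L * D 0 / (n ^ 2 * (n + 1))"
    define B where "B = Lf / n * (a2 + 2 * M2)"
    define P' where "P' = n * (n + 1) * (n + 2)"
    have np: "n \<noteq> 0" "n + 1 \<noteq> 0" "n ^ 2 * (n + 1) \<noteq> 0" using n1 by auto
    have RPe: "R * P = 4 * L * (A * P') + 4 * L * (B * P')"
      unfolding R_def P_def P'_def A_def[symmetric] B_def[symmetric] by (simp add: field_simps)
    have hA: "A * (n ^ 2 * (n + 1)) = 4 * L * D 0" unfolding A_def using np by simp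
    have A0: "0 \<le> A" unfolding A_def using Lpos D0[of 0] n1 by simp
    have "n ^ 2 * (n + 1) \<le> P'" unfolding P'_def using n1 by (simp add: power2_eq_square mult_left_mono)
    then have "A * (n ^ 2 * (n + 1)) \<le> A * P'" using A0 by (rule mult_left_mono)
    then have q1: "4 * L * (4 * L * D 0) \<le> 4 * L * (A * P')" unfolding hA using Lpos by simp
    have hB: "B * n = Lf * (a2 + 2 * M2)" unfolding B_def using np by simp
    have "B * P' = (B * n) * ((n + 1) * (n + 2))" unfolding P'_def by (simp add: algebra_simps)
    also have "\<dots> = Lf * ((a2 + 2 * M2) * (n + 1) * (n + 2))" unfolding hB by (simp add: algebra_simps)
    finally have hB2: "B * P' = Lf * ((a2 + 2 * M2) * (n + 1) * (n + 2))" .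
    have q2: "4 * L * (Lf * (2 * Cc N)) \<le> 4 * L * (B * P')"
      unfolding hB2 using Cc_le Lpos f_lip(1) by (intro mult_left_mono) auto
    have "8 * L * (2 * L * D 0 + Lf * Cc N) = 4 * L * (4 * L * D 0) + 4 * L * (Lf * (2 * Cc N))"
      by (simp add: algebra_simps)
    then show ?thesis using RPe q1 q2 by linarith
  qed
  have "m * P \<le> R * P" using mS S_le RP unfolding P_def by linarith
  then have mR: "m \<le> R" using Ppos by simp
  have part1: "m \<le> 24 * (Lf + Lh) * (4 * (Lf + Lh) * (norm (x0 - xstar))\<^sup>2 / (real N ^ 2 * (real N + 1))
                + Lf / real N * ((norm xstar)\<^sup>2 + 2 * M\<^sup>2))"
    using mR unfolding R_def L_def D0N n_def a2_def M2_def .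
  have part2: "(ereal (f (xag N) + h (xag N)) + X (xag N)) - (ereal (f xstar + h xstar) + X xstar)
           \<le> ereal (4 * (Lf + Lh) * (norm (x0 - xstar))\<^sup>2 / (real N * (real N + 1)))" if Lf0: "Lf = 0"
  proof -
    have "0 \<le> S / (8 * L)" using S0 Lpos by simp
    moreover have "0 \<le> 2 * L * D N" using Lpos D0[of N] by simp
    ultimately have "W N * E N \<le> 2 * L * D 0" using cl Lf0 by simp
    then have "E N * (n * (n + 1)) \<le> 4 * L * D 0" unfolding W_def n_def by (simp add: algebra_simps)
    then have EN: "E N \<le> 4 * L * D 0 / (n * (n + 1))" using n1 by (simp add: le_divide_eq)
    have "(ereal (f (xag N) + h (xag N)) + X (xag N)) - (ereal (f xstar + h xstar) + X xstar) = ereal (E N)"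
      unfolding E_def Psi_def using Xe[OF ag_fin[OF N]] Xe[OF Xs_fin] by simp
    then show ?thesis using EN unfolding L_def D0N n_def by simp
  qed
  show ?thesis using part1 part2 unfolding m_def by blast
qed

end
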